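(* Let $X$ be a compact metrizable space and let $\{U_i\}_{i\in I}$ be a covering of $X$ by open sets. Suppose that for each $i\in I$, $\ell_i$ is a positive log-scale on $\overline{U_i}$ such that for every pair $i,j\in I$ the log-scales $\ell_i$ and $\ell_j$ are Lipschitz equivalent on $\overline{U_i}\cap\overline{U_j}$. Then there is a log-scale $\ell$ on $X$ such that $\ell$ is Lipschitz equivalent to $\ell_i$ on $\overline{U_i}$ for every $i\in I$.
   Context: A log-scale on a set $Y$ is a function $\ell:Y\times Y\to\mathbb{R}\cup\{\infty\}$ such that $\ell(x,y)=\ell(y,x)$, $\ell(x,y)=+\infty$ iff $x=y$, and for some $\delta\ge0$, $\ell(x,z)\ge\min(\ell(x,y),\ell(y,z))-\delta$ for all $x,y,z$. A log-scale on a topological space is assumed to define its topology (via a metric $|\cdot|$ with $c^{-1}\alpha^{\ell(x,y)}\le|x-y|\le c\alpha^{\ell(x,y)}$ for constants $0<\alpha<1$, $c>1$). A log-scale is positive if all its values are positive. Two log-scales $\ell,\ell'$ on a set are Lipschitz equivalent if $|\ell(x,y)-\ell'(x,y)|$ is bounded by a constant for all $x,y$. *)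

theory Defs
  imports "HOL-Analysis.Analysis"
begin

text \<open>Log-scales take values in \<real> \<union> {\<infinity>}; we use ereal values excluding -\<infinity>.\<close>

definition log_scale_on :: "'a set \<Rightarrow> ('a \<Rightarrow> 'a \<Rightarrow> ereal) \<Rightarrow> bool" where
  "log_scale_on Y l \<longleftrightarrow>
     (\<forall>x\<in>Y. \<forall>y\<in>Y. l x y = l y x \<and> l x y \<noteq> -\<infinity> \<and> (l x y = \<infinity> \<longleftrightarrow> x = y)) \<and>
     (\<exists>\<delta>::real. \<delta> \<ge> 0 \<and> (\<forall>x\<in>Y. \<forall>y\<in>Y. \<forall>z\<in>Y. l x z \<ge> min (l x y) (l y z) - ereal \<delta>))"

definition epow :: "real \<Rightarrow> ereal \<Rightarrow> real" where
  "epow \<alpha> e = (case e of ereal r \<Rightarrow> \<alpha> powr r | _ \<Rightarrow> 0)"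

definition top_log_scale :: "'a topology \<Rightarrow> ('a \<Rightarrow> 'a \<Rightarrow> ereal) \<Rightarrow> bool" where
  "top_log_scale T l \<longleftrightarrow> log_scale_on (topspace T) l \<and>
     (\<exists>d \<alpha> c. Metric_space (topspace T) d \<and> Metric_space.mtopology (topspace T) d = T \<and>
        0 < \<alpha> \<and> \<alpha> < 1 \<and> c > 1 \<and>
        (\<forall>x\<in>topspace T. \<forall>y\<in>topspace T.
            epow \<alpha> (l x y) / c \<le> d x y \<and> d x y \<le> c * epow \<alpha> (l x y)))"

definition positive_log_scale_on :: "'a set \<Rightarrow> ('a \<Rightarrow> 'a \<Rightarrow> ereal) \<Rightarrow> bool" where
  "positive_log_scale_on Y l \<longleftrightarrow> (\<forall>x\<in>Y. \<forall>y\<in>Y. l x y > 0)"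

definition lipschitz_equiv_on :: "'a set \<Rightarrow> ('a \<Rightarrow> 'a \<Rightarrow> ereal) \<Rightarrow> ('a \<Rightarrow> 'a \<Rightarrow> ereal) \<Rightarrow> bool" where
  "lipschitz_equiv_on S l l' \<longleftrightarrow>
     (\<exists>C::real. \<forall>x\<in>S. \<forall>y\<in>S. l x y \<le> l' x y + ereal C \<and> l' x y \<le> l x y + ereal C)"

end

theory Submission
  imports Defs
begin

lemma chain_bound:
  fixes \<rho> :: "'a \<Rightarrow> 'a \<Rightarrow> real"
  assumes four: "\<And>x y z w. x\<in>S \<Longrightarrow> y\<in>S \<Longrightarrow> z\<in>S \<Longrightarrow> w\<in>S \<Longrightarrow>
            \<rho> x w \<le> 2 * max (\<rho> x y) (max (\<rho> y z) (\<rho> z w))"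
    and nn: "\<And>x y. x\<in>S \<Longrightarrow> y\<in>S \<Longrightarrow> \<rho> x y \<ge> 0"
    and refl0: "\<And>x. x\<in>S \<Longrightarrow> \<rho> x x = 0"
  shows "(\<forall>k\<le>n. z k \<in> S) \<Longrightarrow> \<rho> (z 0) (z n) \<le> 2 * (\<Sum>k<n. \<rho> (z k) (z (Suc k)))"
proof (induction n arbitrary: z rule: less_induct)
  case (less n)
  show ?case
  proof (cases "n = 0")
    case True
    then show ?thesis using less.prems refl0 by simp
  next
    case False
    define f where "f = (\<lambda>i. \<rho> (z i) (z (Suc i)))"
    have fnn: "\<And>i. i < n \<Longrightarrow> f i \<ge> 0" unfolding f_def using less.prems nn by auto
    define s where "s = (\<Sum>k<n. f k)"
    have s0: "s \<ge> 0" unfolding s_def using fnn by (intro sum_nonneg) auto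
    define K where "K = {k. k < n \<and> (\<Sum>i<k. f i) \<le> s/2}"
    have "0 \<in> K" using False s0 unfolding K_def by simp
    have finK: "finite K" unfolding K_def by simp
    define k where "k = Max K"
    have "k \<in> K" using finK \<open>0 \<in> K\<close> unfolding k_def using Max_in by blast
    then have kn: "k < n" and sk: "(\<Sum>i<k. f i) \<le> s/2" unfolding K_def by auto
    have tail: "(\<Sum>i\<in>{Suc k..<n}. f i) \<le> s/2"
    proof (cases "Suc k < n")
      case True
      have "Suc k \<notin> K"
      proof
        assume "Suc k \<in> K"
        then have "Suc k \<le> k" unfolding k_def using finK Max_ge by blast
        then show False by simp
      qed
      then have "(\<Sum>i<Suc k. f i) > s/2" using True unfolding K_def by auto
      moreover have "s = (\<Sum>i<Suc k. f i) + (\<Sum>i\<in>{Suc k..<n}. f i)"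
        unfolding s_def using kn
        by (metis Suc_leI atLeast0LessThan sum.atLeastLessThan_concat zero_le)
      ultimately show ?thesis by linarith
    next
      case False
      then show ?thesis using s0 by simp
    qed
    have IH1: "\<rho> (z 0) (z k) \<le> 2 * (\<Sum>i<k. f i)"
      using less.IH[OF kn, of z] less.prems kn unfolding f_def by simp
    have IH2: "\<rho> (z (Suc k + 0)) (z (Suc k + (n - Suc k))) \<le>
       2 * (\<Sum>i<n - Suc k. \<rho> (z (Suc k + i)) (z (Suc k + Suc i)))"
      proof (rule less.IH)
      show "n - Suc k < n" using kn by simp
      show "\<forall>i\<le>n - Suc k. z (Suc k + i) \<in> S" using less.prems kn by simp
    qed
    have "(\<Sum>i<n - Suc k. \<rho> (z (Suc k + i)) (z (Suc k + Suc i))) = (\<Sum>i\<in>{Suc k..<n}. f i)"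
    proof -
      have "(\<Sum>i\<in>{Suc k..<n}. f i) = (\<Sum>i\<in>{0 + Suc k..<(n - Suc k) + Suc k}. f i)"
        using kn by simp
      also have "\<dots> = (\<Sum>i\<in>{0..<n - Suc k}. f (i + Suc k))"
        by (rule sum.shift_bounds_nat_ivl)
      finally show ?thesis unfolding f_def by (simp add: atLeast0LessThan add.commute)
    qed
    with IH2 kn have IH2': "\<rho> (z (Suc k)) (z n) \<le> s"
      using tail by auto
    have mid: "f k \<le> s" unfolding s_def
      using kn fnn by (intro member_le_sum) auto
    have "\<rho> (z 0) (z n) \<le> 2 * max (\<rho> (z 0) (z k)) (max (\<rho> (z k) (z (Suc k))) (\<rho> (z (Suc k)) (z n)))"
      using four less.prems kn by simp
    also have "\<dots> \<le> 2 * s" using IH1 sk IH2' mid unfolding f_def by auto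
    finally show ?thesis unfolding s_def f_def .
  qed
qed

definition chainset :: "'a set \<Rightarrow> ('a \<Rightarrow> 'a \<Rightarrow> real) \<Rightarrow> 'a \<Rightarrow> 'a \<Rightarrow> real set" where
  "chainset S \<rho> x y = {(\<Sum>k<n. \<rho> (z k) (z (Suc k))) | n z. z 0 = x \<and> z n = y \<and> (\<forall>k\<le>n. z k \<in> S)}"

definition chaind :: "'a set \<Rightarrow> ('a \<Rightarrow> 'a \<Rightarrow> real) \<Rightarrow> 'a \<Rightarrow> 'a \<Rightarrow> real" where
  "chaind S \<rho> x y = (if x \<in> S \<and> y \<in> S then Inf (chainset S \<rho> x y) else 0)"

lemma chains_single:
  assumes "x \<in> S" "y \<in> S" shows "\<rho> x y \<in> chainset S \<rho> x y"
  unfolding chainset_def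
  apply (rule CollectI)
  apply (rule exI[of _ 1])
  apply (rule exI[of _ "\<lambda>k. if k = 0 then x else y"])
  using assms by auto

lemma chains_rev:
  assumes symm: "\<And>x y. x\<in>S \<Longrightarrow> y\<in>S \<Longrightarrow> \<rho> x y = \<rho> y x"
    and "s \<in> chainset S \<rho> x y" shows "s \<in> chainset S \<rho> y x"
proof -
  obtain n z where s: "s = (\<Sum>k<n. \<rho> (z k) (z (Suc k)))" and z: "z 0 = x" "z n = y" "\<forall>k\<le>n. z k \<in> S"
    using assms(2) unfolding chainset_def by blast
  define z' where "z' = (\<lambda>k. z (n - k))"
  have "(\<Sum>k<n. \<rho> (z' k) (z' (Suc k))) = (\<Sum>k<n. \<rho> (z (n - Suc k)) (z (Suc (n - Suc k))))"
  proof (rule sum.cong)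
    fix k assume "k \<in> {..<n}"
    then have "n - k = Suc (n - Suc k)" by auto
    then show "\<rho> (z' k) (z' (Suc k)) = \<rho> (z (n - Suc k)) (z (Suc (n - Suc k)))"
      unfolding z'_def using symm z(3) by (metis diff_le_self)
  qed simp
  also have "\<dots> = s" unfolding s by (rule sum.nat_diff_reindex)
  finally show ?thesis unfolding chainset_def using z unfolding z'_def by force
qed

lemma chains_concat:
  assumes "s \<in> chainset S \<rho> x y" "t \<in> chainset S \<rho> y w" shows "s + t \<in> chainset S \<rho> x w"
proof -
  obtain n z where s: "s = (\<Sum>k<n. \<rho> (z k) (z (Suc k)))" and z: "z 0 = x" "z n = y" "\<forall>k\<le>n. z k \<in> S"
    using assms(1) unfolding chainset_def by blast
  obtain p v where t: "t = (\<Sum>k<p. \<rho> (v k) (v (Suc k)))" and v: "v 0 = y" "v p = w" "\<forall>k\<le>p. v k \<in> S"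
    using assms(2) unfolding chainset_def by blast
  define c where "c = (\<lambda>k. if k \<le> n then z k else v (k - n))"
  have "(\<Sum>k<n+p. \<rho> (c k) (c (Suc k))) = (\<Sum>k<n. \<rho> (c k) (c (Suc k))) + (\<Sum>k\<in>{n..<n+p}. \<rho> (c k) (c (Suc k)))"
    by (metis atLeast0LessThan le_add1 sum.atLeastLessThan_concat zero_le)
  also have "(\<Sum>k<n. \<rho> (c k) (c (Suc k))) = s" unfolding s c_def by (rule sum.cong) auto
  also have "(\<Sum>k\<in>{n..<n+p}. \<rho> (c k) (c (Suc k))) = (\<Sum>k\<in>{0+n..<p+n}. \<rho> (c k) (c (Suc k)))"
    by (simp add: add.commute)
  also have "\<dots> = (\<Sum>k\<in>{0..<p}. \<rho> (c (k+n)) (c (Suc (k+n))))" by (rule sum.shift_bounds_nat_ivl)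
  also have "\<dots> = t" unfolding t c_def atLeast0LessThan
  proof (rule sum.cong)
    fix k assume "k \<in> {..<p}"
    show "\<rho> (if k + n \<le> n then z (k + n) else v (k + n - n)) (if Suc (k + n) \<le> n then z (Suc (k + n)) else v (Suc (k + n) - n)) = \<rho> (v k) (v (Suc k))"
      using z v by (cases "k = 0") auto
  qed simp
  finally have "(\<Sum>k<n+p. \<rho> (c k) (c (Suc k))) = s + t" .
  moreover have "c 0 = x" "c (n+p) = w" using z v unfolding c_def by auto
  moreover have "\<forall>k\<le>n+p. c k \<in> S" using z v unfolding c_def by auto
  ultimately show ?thesis unfolding chainset_def
    by (intro CollectI exI[of _ "n+p"] exI[of _ c]) simp
qed

lemma chains_lower:
  assumes four: "\<And>x y z w. x\<in>S \<Longrightarrow> y\<in>S \<Longrightarrow> z\<in>S \<Longrightarrow> w\<in>S \<Longrightarrow>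
            \<rho> x w \<le> 2 * max (\<rho> x y) (max (\<rho> y z) (\<rho> z w))"
    and nn: "\<And>x y. x\<in>S \<Longrightarrow> y\<in>S \<Longrightarrow> \<rho> x y \<ge> 0"
    and refl0: "\<And>x. x\<in>S \<Longrightarrow> \<rho> x x = 0"
    and "s \<in> chainset S \<rho> x y"
  shows "\<rho> x y / 2 \<le> s"
proof -
  obtain n z where s: "s = (\<Sum>k<n. \<rho> (z k) (z (Suc k)))" and z: "z 0 = x" "z n = y" "\<forall>k\<le>n. z k \<in> S"
    using assms(4) unfolding chainset_def by blast
  have "\<rho> (z 0) (z n) \<le> 2 * (\<Sum>k<n. \<rho> (z k) (z (Suc k)))"
    by (rule chain_bound[OF four nn refl0]) (use z in auto)
  then show ?thesis using z s by auto
qed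

lemma frink_metric:
  assumes four: "\<And>x y z w. x\<in>S \<Longrightarrow> y\<in>S \<Longrightarrow> z\<in>S \<Longrightarrow> w\<in>S \<Longrightarrow>
            \<rho> x w \<le> 2 * max (\<rho> x y) (max (\<rho> y z) (\<rho> z w))"
    and nn: "\<And>x y. x\<in>S \<Longrightarrow> y\<in>S \<Longrightarrow> \<rho> x y \<ge> 0"
    and refl0: "\<And>x. x\<in>S \<Longrightarrow> \<rho> x x = 0"
    and symm: "\<And>x y. x\<in>S \<Longrightarrow> y\<in>S \<Longrightarrow> \<rho> x y = \<rho> y x"
    and pos: "\<And>x y. x\<in>S \<Longrightarrow> y\<in>S \<Longrightarrow> x \<noteq> y \<Longrightarrow> \<rho> x y > 0"
  shows "Metric_space S (chaind S \<rho>)"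
    and "\<And>x y. x\<in>S \<Longrightarrow> y\<in>S \<Longrightarrow> \<rho> x y / 2 \<le> chaind S \<rho> x y \<and> chaind S \<rho> x y \<le> \<rho> x y"
proof -
  have low: "\<rho> x y / 2 \<le> s" if "s \<in> chainset S \<rho> x y" for x y s
    by (rule chains_lower[where \<rho>=\<rho> and S=S, OF four nn refl0 that])
  have bdd: "bdd_below (chainset S \<rho> x y)" if "x\<in>S" "y\<in>S" for x y
  proof (rule bdd_belowI)
    fix s assume "s \<in> chainset S \<rho> x y"
    then have "\<rho> x y / 2 \<le> s" by (rule low)
    then show "0 \<le> s" using nn[OF that] by linarith
  qed
  have ne: "chainset S \<rho> x y \<noteq> {}" if "x\<in>S" "y\<in>S" for x y
    using chains_single[OF that] by blast
  have Deq: "chaind S \<rho> x y = Inf (chainset S \<rho> x y)" if "x\<in>S" "y\<in>S" for x y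
    using that by (simp add: chaind_def)
  have Dle: "chaind S \<rho> x y \<le> s" if "x\<in>S" "y\<in>S" "s \<in> chainset S \<rho> x y" for x y s
    unfolding Deq[OF that(1,2)] by (rule cInf_lower[OF that(3) bdd[OF that(1,2)]])
  have Dge: "t \<le> chaind S \<rho> x y" if "x\<in>S" "y\<in>S" "\<And>s. s \<in> chainset S \<rho> x y \<Longrightarrow> t \<le> s" for x y t
    unfolding Deq[OF that(1,2)] by (rule cInf_greatest[OF ne[OF that(1,2)]]) (rule that(3))
  show bnd: "\<rho> x y / 2 \<le> chaind S \<rho> x y \<and> chaind S \<rho> x y \<le> \<rho> x y" if "x\<in>S" "y\<in>S" for x y
  proof
    show "\<rho> x y / 2 \<le> chaind S \<rho> x y" by (rule Dge[OF that]) (rule low)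
    show "chaind S \<rho> x y \<le> \<rho> x y" by (rule Dle[OF that chains_single[OF that]])
  qed
  have symD: "chaind S \<rho> x y = chaind S \<rho> y x" for x y
  proof (cases "x \<in> S \<and> y \<in> S")
    case True
    have "chainset S \<rho> x y = chainset S \<rho> y x"
    proof (intro equalityI subsetI)
      fix s assume h: "s \<in> chainset S \<rho> x y" show "s \<in> chainset S \<rho> y x"
        by (rule chains_rev, rule symm, assumption, assumption, rule h)
    next
      fix s assume h: "s \<in> chainset S \<rho> y x" show "s \<in> chainset S \<rho> x y"
        by (rule chains_rev, rule symm, assumption, assumption, rule h)
    qed
    then show ?thesis unfolding chaind_def by simp
  next
    case False
    then show ?thesis unfolding chaind_def by auto
  qed
  show "Metric_space S (chaind S \<rho>)"
  proof
    fix x y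
    show "0 \<le> chaind S \<rho> x y"
    proof (cases "x \<in> S \<and> y \<in> S")
      case True
      then have "\<rho> x y / 2 \<le> chaind S \<rho> x y" using bnd by blast
      then show ?thesis using nn[of x y] True by linarith
    next
      case False
      then show ?thesis unfolding chaind_def by auto
    qed
    show "chaind S \<rho> x y = chaind S \<rho> y x" by (rule symD)
  next
    fix x y assume xy: "x \<in> S" "y \<in> S"
    show "chaind S \<rho> x y = 0 \<longleftrightarrow> x = y"
    proof
      assume h: "chaind S \<rho> x y = 0"
      show "x = y"
      proof (rule ccontr)
        assume "x \<noteq> y"
        then have "\<rho> x y > 0" by (rule pos[OF xy])
        then show False using bnd[OF xy] h by linarith
      qed
    next
      assume "x = y"
      then have "\<rho> x y = 0" using refl0 xy by simp
      then show "chaind S \<rho> x y = 0" using bnd[OF xy] by linarith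
    qed
  next
    fix x y z assume xyz: "x \<in> S" "y \<in> S" "z \<in> S"
    have "chaind S \<rho> x z - s \<le> chaind S \<rho> y z" if s: "s \<in> chainset S \<rho> x y" for s
    proof (rule Dge[OF xyz(2,3)])
      fix t assume t: "t \<in> chainset S \<rho> y z"
      have "s + t \<in> chainset S \<rho> x z" by (rule chains_concat[OF s t])
      then have "chaind S \<rho> x z \<le> s + t" by (rule Dle[OF xyz(1,3)])
      then show "chaind S \<rho> x z - s \<le> t" by simp
    qed
    then have "chaind S \<rho> x z - chaind S \<rho> y z \<le> chaind S \<rho> x y"
      by (intro Dge[OF xyz(1,2)]) (simp add: algebra_simps)
    then show "chaind S \<rho> x z \<le> chaind S \<rho> x y + chaind S \<rho> y z" by simp
  qed
qed

lemma epow_nonneg: "epow \<alpha> e \<ge> 0"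
  unfolding epow_def by (cases e) auto

lemma epow_ereal [simp]: "epow \<alpha> (ereal r) = \<alpha> powr r"
  unfolding epow_def by simp

lemma epow_inf [simp]: "epow \<alpha> \<infinity> = 0"
  unfolding epow_def by simp

lemma epow_anti:
  assumes "0 < \<alpha>" "\<alpha> < 1" "a \<noteq> -\<infinity>" "a \<le> b"
  shows "epow \<alpha> b \<le> epow \<alpha> a"
  using assms by (cases a; cases b) (auto intro: powr_mono' simp: epow_def)

lemma epow_min:
  assumes "0 < \<alpha>" "\<alpha> < 1" "a \<noteq> -\<infinity>" "b \<noteq> -\<infinity>"
  shows "epow \<alpha> (min a b) = max (epow \<alpha> a) (epow \<alpha> b)"
proof (cases "a \<le> b")
  case True
  then show ?thesis using epow_anti[OF assms(1,2,3) True] by (simp add: min_def max_def)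
next
  case False
  then have "b \<le> a" by simp
  then show ?thesis using epow_anti[OF assms(1,2,4) \<open>b \<le> a\<close>] False
    by (auto simp add: min_def max_def)
qed

lemma epow_minus:
  assumes "a \<noteq> -\<infinity>" "0 < \<alpha>"
  shows "epow \<alpha> (a - ereal t) = \<alpha> powr (-t) * epow \<alpha> a"
  using assms by (cases a) (auto simp: powr_add[symmetric])

lemma ereal_chain:
  fixes a b c d e :: ereal and \<delta> :: real
  assumes "a \<noteq> -\<infinity>" "b \<noteq> -\<infinity>" "c \<noteq> -\<infinity>" "d \<noteq> -\<infinity>" "e \<noteq> -\<infinity>"
    and "d \<ge> min a b - ereal \<delta>" "e \<ge> min d c - ereal \<delta>" "\<delta> \<ge> 0"
  shows "e \<ge> min a (min b c) - ereal (2*\<delta>)"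
proof -
  define m3 where "m3 = min a (min b c)"
  have m1: "m3 \<le> min a b" unfolding m3_def by (simp add: min.coboundedI1 min.coboundedI2)
  have dd: "m3 - ereal \<delta> \<le> d" using ereal_minus_mono[OF m1 order_refl] assms(6) by (rule order_trans)
  have "m3 \<le> c" unfolding m3_def by (simp add: min.coboundedI2)
  then have cc: "m3 - ereal \<delta> \<le> c" using ereal_diff_le_mono_left[of m3 c "ereal \<delta>"] assms(8) by simp
  have "m3 - ereal \<delta> \<le> min d c" using dd cc by simp
  then have "m3 - ereal \<delta> - ereal \<delta> \<le> min d c - ereal \<delta>" by (rule ereal_minus_mono) simp
  also have "m3 - ereal \<delta> - ereal \<delta> = m3 - ereal (2*\<delta>)"
    using ereal_diff_add_eq_diff_diff_swap[of "ereal \<delta>" m3 "ereal \<delta>"] by simp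
  finally show ?thesis using assms(7) unfolding m3_def by simp
qed

lemma mtop_sub:
  assumes "Metric_space S d1" "Metric_space S d2"
    and "\<And>x r. x \<in> S \<Longrightarrow> r > 0 \<Longrightarrow> \<exists>r'>0. \<forall>y\<in>S. d2 x y < r' \<longrightarrow> d1 x y < r"
    and "openin (Metric_space.mtopology S d1) U"
  shows "openin (Metric_space.mtopology S d2) U"
proof -
  have U: "U \<subseteq> S" "\<And>x. x \<in> U \<Longrightarrow> \<exists>r>0. Metric_space.mball S d1 x r \<subseteq> U"
    using assms(4) Metric_space.openin_mtopology[OF assms(1)] by auto
  show ?thesis unfolding Metric_space.openin_mtopology[OF assms(2)]
  proof (intro conjI allI impI)
    show "U \<subseteq> S" by fact
    fix x assume "x \<in> U"
    then obtain r where r: "r > 0" "Metric_space.mball S d1 x r \<subseteq> U" using U by blast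
    obtain r' where r': "r' > 0" "\<forall>y\<in>S. d2 x y < r' \<longrightarrow> d1 x y < r"
      using assms(3)[of x r] \<open>x \<in> U\<close> U(1) r by blast
    have "Metric_space.mball S d2 x r' \<subseteq> U"
    proof
      fix y assume "y \<in> Metric_space.mball S d2 x r'"
      then have y: "y \<in> S" "d2 x y < r'" using Metric_space.in_mball[OF assms(2)] by auto
      then have "d1 x y < r" using r' by blast
      then have "y \<in> Metric_space.mball S d1 x r"
        using y(1) \<open>x \<in> U\<close> U(1) Metric_space.in_mball[OF assms(1)] by blast
      then show "y \<in> U" using r(2) by blast
    qed
    then show "\<exists>r>0. Metric_space.mball S d2 x r \<subseteq> U" using r' by blast
  qed
qed

lemma mtop_eq:
  assumes "Metric_space S d1" "Metric_space S d2"
    and "\<And>x r. x \<in> S \<Longrightarrow> r > 0 \<Longrightarrow> \<exists>r'>0. \<forall>y\<in>S. d2 x y < r' \<longrightarrow> d1 x y < r"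
    and "\<And>x r. x \<in> S \<Longrightarrow> r > 0 \<Longrightarrow> \<exists>r'>0. \<forall>y\<in>S. d1 x y < r' \<longrightarrow> d2 x y < r"
  shows "Metric_space.mtopology S d1 = Metric_space.mtopology S d2"
proof (rule topology_eq[THEN iffD2], intro allI iffI)
  fix U
  show "openin (Metric_space.mtopology S d1) U \<Longrightarrow> openin (Metric_space.mtopology S d2) U"
    by (rule mtop_sub[OF assms(1,2,3)])
  show "openin (Metric_space.mtopology S d2) U \<Longrightarrow> openin (Metric_space.mtopology S d1) U"
    by (rule mtop_sub[OF assms(2,1,4)])
qed

lemma log_scale_top:
  assumes ms: "Metric_space S m" and ls: "log_scale_on S l"
    and T1: "\<And>\<epsilon>. \<epsilon> > 0 \<Longrightarrow> \<exists>M. \<forall>x\<in>S. \<forall>y\<in>S. l x y > ereal M \<longrightarrow> m x y < \<epsilon>"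
    and T2: "\<And>x M. x \<in> S \<Longrightarrow> \<exists>r>0. \<forall>y\<in>S. m x y < r \<longrightarrow> l x y > ereal M"
  shows "top_log_scale (Metric_space.mtopology S m) l"
proof -
  have top: "topspace (Metric_space.mtopology S m) = S"
    by (rule Metric_space.topspace_mtopology[OF ms])
  have ls1: "\<forall>x\<in>S. \<forall>y\<in>S. l x y = l y x \<and> l x y \<noteq> -\<infinity> \<and> (l x y = \<infinity> \<longleftrightarrow> x = y)"
    using ls unfolding log_scale_on_def by (rule conjunct1)
  have lsym: "\<And>x y. x\<in>S \<Longrightarrow> y\<in>S \<Longrightarrow> l x y = l y x"
    and lninf: "\<And>x y. x\<in>S \<Longrightarrow> y\<in>S \<Longrightarrow> l x y \<noteq> -\<infinity>"
    and linf: "\<And>x y. x\<in>S \<Longrightarrow> y\<in>S \<Longrightarrow> l x y = \<infinity> \<longleftrightarrow> x = y"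
    using ls1 by blast+
  have "\<exists>\<delta>::real. \<delta> \<ge> 0 \<and> (\<forall>x\<in>S. \<forall>y\<in>S. \<forall>z\<in>S. l x z \<ge> min (l x y) (l y z) - ereal \<delta>)"
    using ls unfolding log_scale_on_def by (rule conjunct2)
  then obtain \<delta> :: real where d0: "\<delta> \<ge> 0"
    and tri0: "\<forall>x\<in>S. \<forall>y\<in>S. \<forall>z\<in>S. l x z \<ge> min (l x y) (l y z) - ereal \<delta>"
    by blast
  have tri: "\<And>x y z. x\<in>S \<Longrightarrow> y\<in>S \<Longrightarrow> z\<in>S \<Longrightarrow> l x z \<ge> min (l x y) (l y z) - ereal \<delta>"
    using tri0 by blast
  define \<alpha> where "\<alpha> = (1/2::real) powr (1/(2*\<delta>+2))"
  have a0: "0 < \<alpha>" unfolding \<alpha>_def by simp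
  have a1: "\<alpha> < 1"
  proof -
    have "(1/2::real) powr (1/(2*\<delta>+2)) < 1 powr (1/(2*\<delta>+2))"
      using d0 by (intro powr_less_mono2) auto
    then show ?thesis unfolding \<alpha>_def by simp
  qed
  have a2: "\<alpha> powr (-(2*\<delta>)) \<le> 2"
  proof -
    have "\<alpha> powr (-(2*\<delta>)) = (1/2::real) powr (-(2*\<delta>)/(2*\<delta>+2))"
      unfolding \<alpha>_def powr_powr by simp
    also have "\<dots> = 2 powr ((2*\<delta>)/(2*\<delta>+2))"
      by (simp add: powr_minus_divide powr_divide divide_simps)
    also have "\<dots> \<le> 2 powr 1" using d0 by (intro powr_mono) auto
    finally show ?thesis by simp
  qed
  define \<rho> where "\<rho> = (\<lambda>x y. epow \<alpha> (l x y))"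
  have four: "\<rho> x w \<le> 2 * max (\<rho> x y) (max (\<rho> y z) (\<rho> z w))"
    if S: "x\<in>S" "y\<in>S" "z\<in>S" "w\<in>S" for x y z w
  proof -
    have t1: "l x z \<ge> min (l x y) (l y z) - ereal \<delta>" by (rule tri[OF S(1,2,3)])
    have t2: "l x w \<ge> min (l x z) (l z w) - ereal \<delta>" by (rule tri[OF S(1,3,4)])
    have e: "l x w \<ge> min (l x y) (min (l y z) (l z w)) - ereal (2*\<delta>)"
      by (rule ereal_chain[OF lninf[OF S(1,2)] lninf[OF S(2,3)] lninf[OF S(3,4)]
            lninf[OF S(1,3)] lninf[OF S(1,4)] t1 t2 d0])
    have mninf: "min (l x y) (min (l y z) (l z w)) \<noteq> -\<infinity>"
      using lninf[OF S(1,2)] lninf[OF S(2,3)] lninf[OF S(3,4)] by (simp add: min_def)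
    have mninf2: "min (l x y) (min (l y z) (l z w)) - ereal (2*\<delta>) \<noteq> -\<infinity>"
      using mninf by (cases "min (l x y) (min (l y z) (l z w))") auto
    have "\<rho> x w \<le> epow \<alpha> (min (l x y) (min (l y z) (l z w)) - ereal (2*\<delta>))"
      unfolding \<rho>_def by (rule epow_anti[OF a0 a1 mninf2 e])
    have mb: "min (l y z) (l z w) \<noteq> -\<infinity>"
      using lninf[OF S(2,3)] lninf[OF S(3,4)] by (simp add: min_def)
    have "epow \<alpha> (min (l x y) (min (l y z) (l z w))) = max (\<rho> x y) (max (\<rho> y z) (\<rho> z w))"
      unfolding \<rho>_def epow_min[OF a0 a1 lninf[OF S(1,2)] mb]
        epow_min[OF a0 a1 lninf[OF S(2,3)] lninf[OF S(3,4)]] by (rule refl)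
    then have "epow \<alpha> (min (l x y) (min (l y z) (l z w)) - ereal (2*\<delta>)) = \<alpha> powr (-(2*\<delta>)) * max (\<rho> x y) (max (\<rho> y z) (\<rho> z w))"
      unfolding epow_minus[OF mninf a0] by simp
    also have "\<dots> \<le> 2 * max (\<rho> x y) (max (\<rho> y z) (\<rho> z w))"
      by (rule mult_right_mono[OF a2]) (simp add: \<rho>_def epow_nonneg le_max_iff_disj)
    finally have "epow \<alpha> (min (l x y) (min (l y z) (l z w)) - ereal (2*\<delta>)) \<le> 2 * max (\<rho> x y) (max (\<rho> y z) (\<rho> z w))" .
    with \<open>\<rho> x w \<le> _\<close> show ?thesis by linarith
  qed
  have nn: "\<And>x y. x\<in>S \<Longrightarrow> y\<in>S \<Longrightarrow> \<rho> x y \<ge> 0" unfolding \<rho>_def by (simp add: epow_nonneg)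
  have refl0: "\<And>x. x\<in>S \<Longrightarrow> \<rho> x x = 0"
  proof -
    fix x assume "x \<in> S"
    then have "l x x = \<infinity>" using linf by blast
    then show "\<rho> x x = 0" unfolding \<rho>_def by simp
  qed
  have symm: "\<And>x y. x\<in>S \<Longrightarrow> y\<in>S \<Longrightarrow> \<rho> x y = \<rho> y x" unfolding \<rho>_def using lsym by simp
  have pos: "\<And>x y. x\<in>S \<Longrightarrow> y\<in>S \<Longrightarrow> x \<noteq> y \<Longrightarrow> \<rho> x y > 0"
  proof -
    fix x y assume "x\<in>S" "y\<in>S" "x \<noteq> y"
    then have "l x y \<noteq> \<infinity>" "l x y \<noteq> -\<infinity>" using linf lninf by auto
    then show "\<rho> x y > 0" unfolding \<rho>_def using a0 by (cases "l x y") auto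
  qed
  define D where "D = chaind S \<rho>"
  have msD: "Metric_space S D" unfolding D_def by (rule frink_metric(1)[where \<rho>=\<rho> and S=S, OF four nn refl0 symm pos])
  have bnd: "\<And>x y. x\<in>S \<Longrightarrow> y\<in>S \<Longrightarrow> \<rho> x y / 2 \<le> D x y \<and> D x y \<le> \<rho> x y"
    unfolding D_def by (rule frink_metric(2)[where \<rho>=\<rho> and S=S, OF four nn refl0 symm pos])
  have eq: "Metric_space.mtopology S D = Metric_space.mtopology S m"
  proof (rule mtop_eq[OF msD ms])
    fix x r assume x: "x \<in> S" and r: "(r::real) > 0"
    define M where "M = log \<alpha> (r/2)"
    have aM: "\<alpha> powr M = r/2" unfolding M_def using a0 a1 r by simp
    obtain r' where r': "r' > 0" "\<forall>y\<in>S. m x y < r' \<longrightarrow> l x y > ereal M" using T2[OF x] by blast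
    have "\<forall>y\<in>S. m x y < r' \<longrightarrow> D x y < r"
    proof (intro ballI impI)
      fix y assume y: "y \<in> S" "m x y < r'"
      then have "l x y > ereal M" using r' by blast
      then have "\<rho> x y \<le> epow \<alpha> (ereal M)" unfolding \<rho>_def
        by (intro epow_anti[OF a0 a1]) auto
      then show "D x y < r" using bnd[OF x y(1)] aM r by simp
    qed
    then show "\<exists>r'>0. \<forall>y\<in>S. m x y < r' \<longrightarrow> D x y < r" using r' by blast
  next
    fix x r assume x: "x \<in> S" and r: "(r::real) > 0"
    obtain M where M: "\<forall>x\<in>S. \<forall>y\<in>S. l x y > ereal M \<longrightarrow> m x y < r" using T1[OF r] by blast
    have "\<forall>y\<in>S. D x y < \<alpha> powr M / 2 \<longrightarrow> m x y < r"
    proof (intro ballI impI)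
      fix y assume y: "y \<in> S" "D x y < \<alpha> powr M / 2"
      have "\<rho> x y < epow \<alpha> (ereal M)" using bnd[OF x y(1)] y(2) by simp
      then have "\<not> l x y \<le> ereal M" unfolding \<rho>_def
        using epow_anti[OF a0 a1, of "l x y" "ereal M"] lninf[OF x y(1)] by auto
      then show "m x y < r" using M x y(1) by auto
    qed
    then show "\<exists>r'>0. \<forall>y\<in>S. D x y < r' \<longrightarrow> m x y < r" using a0
      by (intro exI[of _ "\<alpha> powr M / 2"]) auto
  qed
  show ?thesis
    unfolding top_log_scale_def top
  proof (intro conjI exI)
    show "log_scale_on S l" by fact
    show "Metric_space S D" by fact
    show "Metric_space.mtopology S D = Metric_space.mtopology S m" by fact
    show "0 < \<alpha>" "\<alpha> < 1" "(2::real) > 1" by (fact a0, fact a1, simp)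
    show "\<forall>x\<in>S. \<forall>y\<in>S. epow \<alpha> (l x y) / 2 \<le> D x y \<and> D x y \<le> 2 * epow \<alpha> (l x y)"
    proof (intro ballI conjI)
      fix x y assume xy: "x \<in> S" "y \<in> S"
      show "epow \<alpha> (l x y) / 2 \<le> D x y" using bnd[OF xy] unfolding \<rho>_def by blast
      have "D x y \<le> epow \<alpha> (l x y)" using bnd[OF xy] unfolding \<rho>_def by blast
      then show "D x y \<le> 2 * epow \<alpha> (l x y)" using epow_nonneg[of \<alpha> "l x y"] by linarith
    qed
  qed
qed

lemma unif_helper:
  assumes msA: "Metric_space A d" and ms: "Metric_space S m" and AS: "A \<subseteq> S"
    and eq: "Metric_space.mtopology A d = subtopology (Metric_space.mtopology S m) A"
    and cpt: "compact_space (Metric_space.mtopology A d)" and e: "\<epsilon> > 0"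
  shows "\<exists>\<eta>>0. \<forall>x\<in>A. \<forall>y\<in>A. d x y < \<eta> \<longrightarrow> m x y < \<epsilon>"
proof -
  have "continuous_map (mtopology_of (metric (A,d))) (mtopology_of (metric (S,m))) id"
    unfolding Metric_space.mtopology_of[OF msA] Metric_space.mtopology_of[OF ms] eq
    by (rule continuous_map_id_subt)
  moreover have "compact_space (mtopology_of (metric (A,d)))"
    unfolding Metric_space.mtopology_of[OF msA] by (rule cpt)
  ultimately have "uniformly_continuous_map (metric (A,d)) (metric (S,m)) id"
    using continuous_imp_uniformly_continuous_map by blast
  then have "\<forall>\<epsilon>>0. \<exists>\<eta>>0. \<forall>x\<in>A. \<forall>y\<in>A. d y x < \<eta> \<longrightarrow> m y x < \<epsilon>"
    unfolding uniformly_continuous_map_def Metric_space.mspace_metric[OF msA]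
      Metric_space.mdist_metric[OF msA] Metric_space.mdist_metric[OF ms] id_def
    by (elim conjE)
  then obtain \<eta> where "\<eta> > 0" "\<forall>x\<in>A. \<forall>y\<in>A. d y x < \<eta> \<longrightarrow> m y x < \<epsilon>"
    using e by blast
  then show ?thesis by blast
qed

lemma pt_helper:
  assumes msA: "Metric_space A d" and ms: "Metric_space S m" and AS: "A \<subseteq> S"
    and eq: "Metric_space.mtopology A d = subtopology (Metric_space.mtopology S m) A"
    and x: "x \<in> A" and e: "\<epsilon> > 0"
  shows "\<exists>r>0. \<forall>y\<in>A. m x y < r \<longrightarrow> d x y < \<epsilon>"
proof -
  have "openin (Metric_space.mtopology A d) (Metric_space.mball A d x \<epsilon>)"
    by (rule Metric_space.openin_mball[OF msA])
  then obtain V where V: "openin (Metric_space.mtopology S m) V"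
    "Metric_space.mball A d x \<epsilon> = V \<inter> A"
    unfolding eq openin_subtopology by blast
  have "x \<in> V" using V(2) x e Metric_space.centre_in_mball_iff[OF msA] by blast
  then obtain r where r: "r > 0" "Metric_space.mball S m x r \<subseteq> V"
    using V(1) Metric_space.openin_mtopology[OF ms] by blast
  have "\<forall>y\<in>A. m x y < r \<longrightarrow> d x y < \<epsilon>"
  proof (intro ballI impI)
    fix y assume y: "y \<in> A" "m x y < r"
    then have "y \<in> V" using r AS x Metric_space.in_mball[OF ms] by blast
    then have "y \<in> Metric_space.mball A d x \<epsilon>" using V(2) y by blast
    then show "d x y < \<epsilon>" using Metric_space.in_mball[OF msA] by blast
  qed
  then show ?thesis using r by blast
qed

lemma K_lemma:
  assumes ms: "Metric_space S m" and AS: "A \<subseteq> S"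
    and tl: "top_log_scale (subtopology (Metric_space.mtopology S m) A) L"
    and cpt: "compact_space (Metric_space.mtopology S m)"
    and cl: "closedin (Metric_space.mtopology S m) A" and e: "\<epsilon> > 0"
  shows "\<exists>M. \<forall>x\<in>A. \<forall>y\<in>A. L x y > ereal M \<longrightarrow> m x y < \<epsilon>"
proof -
  have top: "topspace (subtopology (Metric_space.mtopology S m) A) = A"
    using AS Metric_space.topspace_mtopology[OF ms] by auto
  obtain d \<alpha> c where msA: "Metric_space A d"
    and eq: "Metric_space.mtopology A d = subtopology (Metric_space.mtopology S m) A"
    and a: "0 < \<alpha>" "\<alpha> < 1" "c > 1"
    and b: "\<forall>x\<in>A. \<forall>y\<in>A. epow \<alpha> (L x y) / c \<le> d x y \<and> d x y \<le> c * epow \<alpha> (L x y)"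
    and ls: "log_scale_on A L"
    using tl unfolding top_log_scale_def top by blast
  have "compact_space (Metric_space.mtopology A d)"
    unfolding eq by (rule compact_space_subtopology[OF closedin_compact_space[OF cpt cl]])
  then obtain \<eta> where \<eta>: "\<eta> > 0" "\<forall>x\<in>A. \<forall>y\<in>A. d x y < \<eta> \<longrightarrow> m x y < \<epsilon>"
    using unif_helper[OF msA ms AS eq _ e] by blast
  define M where "M = log \<alpha> (\<eta>/(2*c))"
  have aM: "\<alpha> powr M = \<eta>/(2*c)" unfolding M_def using a \<eta> by simp
  have "\<forall>x\<in>A. \<forall>y\<in>A. L x y > ereal M \<longrightarrow> m x y < \<epsilon>"
  proof (intro ballI impI)
    fix x y assume xy: "x \<in> A" "y \<in> A" "L x y > ereal M"
    show "m x y < \<epsilon>"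
    proof (cases "L x y")
      case (real t)
      then have "t > M" using xy by simp
      then have "\<alpha> powr t < \<alpha> powr M" using a by (intro powr_less_mono') auto
      then have "c * \<alpha> powr t < c * \<alpha> powr M" using a by (intro mult_strict_left_mono) auto
      moreover have "c * \<alpha> powr M = \<eta>/2" using aM a by simp
      moreover have "d x y \<le> c * epow \<alpha> (L x y)" using b xy(1,2) by blast
      ultimately have "d x y < \<eta>" using \<eta> real by simp
      then show ?thesis using \<eta> xy by blast
    next
      case PInf
      then have "x = y" using ls xy unfolding log_scale_on_def by auto
      then show ?thesis using Metric_space.mdist_zero[OF ms] AS xy e by auto
    next
      case MInf
      then show ?thesis using xy by simp
    qed
  qed
  then show ?thesis by blast
qed

lemma P_lemma:
  assumes ms: "Metric_space S m" and AS: "A \<subseteq> S"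
    and tl: "top_log_scale (subtopology (Metric_space.mtopology S m) A) L"
    and x: "x \<in> A"
  shows "\<exists>r>0. \<forall>y\<in>A. m x y < r \<longrightarrow> L x y > ereal M"
proof -
  have top: "topspace (subtopology (Metric_space.mtopology S m) A) = A"
    using AS Metric_space.topspace_mtopology[OF ms] by auto
  obtain d \<alpha> c where msA: "Metric_space A d"
    and eq: "Metric_space.mtopology A d = subtopology (Metric_space.mtopology S m) A"
    and a: "0 < \<alpha>" "\<alpha> < 1" "c > 1"
    and b: "\<forall>x\<in>A. \<forall>y\<in>A. epow \<alpha> (L x y) / c \<le> d x y \<and> d x y \<le> c * epow \<alpha> (L x y)"
    and ls: "log_scale_on A L"
    using tl unfolding top_log_scale_def top by blast
  have "\<alpha> powr M / c > 0" using a by simp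
  then obtain r where r: "r > 0" "\<forall>y\<in>A. m x y < r \<longrightarrow> d x y < \<alpha> powr M / c"
    using pt_helper[OF msA ms AS eq x] by blast
  have "\<forall>y\<in>A. m x y < r \<longrightarrow> L x y > ereal M"
  proof (intro ballI impI)
    fix y assume y: "y \<in> A" "m x y < r"
    then have dl: "d x y < \<alpha> powr M / c" using r by blast
    show "L x y > ereal M"
    proof (cases "L x y")
      case (real t)
      have "epow \<alpha> (L x y) / c \<le> d x y" using b x y(1) by blast
      then have "\<alpha> powr t / c \<le> d x y" using real by simp
      then have "\<alpha> powr t / c < \<alpha> powr M / c" using dl by linarith
      have lt: "\<alpha> powr t < \<alpha> powr M"
      proof (rule ccontr)
        assume "\<not> \<alpha> powr t < \<alpha> powr M"
        then have "\<alpha> powr M / c \<le> \<alpha> powr t / c" using a by (intro divide_right_mono) auto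
        then show False using \<open>\<alpha> powr t / c < \<alpha> powr M / c\<close> by linarith
      qed
      have "t > M"
      proof (rule ccontr)
        assume "\<not> t > M"
        then have "\<alpha> powr M \<le> \<alpha> powr t" using a by (intro powr_mono') auto
        then show False using lt by simp
      qed
      then show ?thesis using real by simp
    next
      case PInf then show ?thesis by simp
    next
      case MInf
      then show ?thesis using ls x y unfolding log_scale_on_def by auto
    qed
  qed
  then show ?thesis using r by blast
qed

lemma finite_bound:
  assumes "finite F" "\<And>k. k \<in> F \<Longrightarrow> \<exists>M::real. Q k M"
    and mono: "\<And>k M M'. Q k M \<Longrightarrow> M \<le> M' \<Longrightarrow> Q k M'"
  shows "\<exists>M\<ge>0. \<forall>k\<in>F. Q k M"
  using assms(1,2)
proof (induction F rule: finite_induct)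
  case empty
  then show ?case by auto
next
  case (insert a F)
  obtain M1 where M1: "M1 \<ge> 0" "\<forall>k\<in>F. Q k M1"
    using insert.IH insert.prems by blast
  obtain M2 where M2: "Q a M2" using insert.prems by blast
  have "\<forall>k\<in>insert a F. Q k (max M1 M2)"
  proof
    fix k assume k: "k \<in> insert a F"
    show "Q k (max M1 M2)"
    proof (cases "k = a")
      case True
      then show ?thesis using mono[OF M2, of "max M1 M2"] by simp
    next
      case False
      then have "k \<in> F" using k by simp
      then show ?thesis using M1 mono[of k M1 "max M1 M2"] by simp
    qed
  qed
  moreover have "max M1 M2 \<ge> 0" using M1 by simp
  ultimately show ?case by blast
qed

lemma ereal_add_le_mono: "(a::ereal) \<le> b + ereal C \<Longrightarrow> C \<le> C' \<Longrightarrow> a \<le> b + ereal C'"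
  by (erule order_trans) (simp add: add_left_mono)

theorem theorem1p1p8:
  fixes X :: "'a topology" and I :: "'i set" and U :: "'i \<Rightarrow> 'a set"
    and L :: "'i \<Rightarrow> 'a \<Rightarrow> 'a \<Rightarrow> ereal"
  assumes "compact_space X" and "metrizable_space X"
    and "\<And>i. i \<in> I \<Longrightarrow> openin X (U i)"
    and "topspace X \<subseteq> (\<Union>i\<in>I. U i)"
    and "\<And>i. i \<in> I \<Longrightarrow> top_log_scale (subtopology X (X closure_of U i)) (L i)"
    and "\<And>i. i \<in> I \<Longrightarrow> positive_log_scale_on (X closure_of U i) (L i)"
    and "\<And>i j. i \<in> I \<Longrightarrow> j \<in> I \<Longrightarrow>
           lipschitz_equiv_on (X closure_of U i \<inter> X closure_of U j) (L i) (L j)"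
  shows "\<exists>l. top_log_scale X l \<and>
           (\<forall>i\<in>I. lipschitz_equiv_on (X closure_of U i) l (L i))"
proof -
  obtain M0 m where ms0: "Metric_space M0 m" and Xeq: "X = Metric_space.mtopology M0 m"
    using assms(2) unfolding metrizable_space_def by blast
  define S where "S = topspace X"
  have SM: "S = M0" unfolding S_def Xeq by (rule Metric_space.topspace_mtopology[OF ms0])
  have ms: "Metric_space S m" using SM ms0 by simp
  have Xm: "X = Metric_space.mtopology S m" using Xeq SM by simp
  define A where "A = (\<lambda>i. X closure_of U i)"
  have AS: "\<And>i. A i \<subseteq> S" unfolding A_def S_def by (rule closure_of_subset_topspace)
  have Acl: "\<And>i. closedin X (A i)" unfolding A_def by (rule closedin_closure_of)
  have UA: "\<And>i. i \<in> I \<Longrightarrow> U i \<subseteq> A i"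
    unfolding A_def using assms(3) by (intro closure_of_subset openin_subset) auto
  have tl: "\<And>i. i \<in> I \<Longrightarrow> top_log_scale (subtopology (Metric_space.mtopology S m) (A i)) (L i)"
    using assms(5) unfolding A_def Xm[symmetric] by blast
  have cpt: "compact_space (Metric_space.mtopology S m)" using assms(1) Xm by simp
  have clA: "\<And>i. closedin (Metric_space.mtopology S m) (A i)" using Acl Xm by simp
  have Lpos: "\<And>i x y. i \<in> I \<Longrightarrow> x \<in> A i \<Longrightarrow> y \<in> A i \<Longrightarrow> L i x y > 0"
    using assms(6) unfolding positive_log_scale_on_def A_def by blast
  have lsi: "\<And>i. i \<in> I \<Longrightarrow> log_scale_on (A i) (L i)"
  proof -
    fix i assume i: "i \<in> I"
    have "topspace (subtopology X (A i)) = A i" using AS[of i] S_def by auto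
    then show "log_scale_on (A i) (L i)" using assms(5)[OF i] unfolding top_log_scale_def A_def by simp
  qed
  have Lsym: "\<And>i x y. i \<in> I \<Longrightarrow> x \<in> A i \<Longrightarrow> y \<in> A i \<Longrightarrow> L i x y = L i y x"
    using lsi unfolding log_scale_on_def by blast
  have Lninf: "\<And>i x y. i \<in> I \<Longrightarrow> x \<in> A i \<Longrightarrow> y \<in> A i \<Longrightarrow> L i x y \<noteq> -\<infinity>"
    using lsi unfolding log_scale_on_def by blast
  have Linf: "\<And>i x y. i \<in> I \<Longrightarrow> x \<in> A i \<Longrightarrow> y \<in> A i \<Longrightarrow> L i x y = \<infinity> \<longleftrightarrow> x = y"
    using lsi unfolding log_scale_on_def by blast
  have oc: "(\<forall>V\<in>U ` I. openin X V) \<and> topspace X \<subseteq> \<Union>(U ` I)" using assms(3,4) by auto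
  have "\<exists>\<F>. finite \<F> \<and> \<F> \<subseteq> U ` I \<and> topspace X \<subseteq> \<Union>\<F>"
    using compact_space_alt[THEN iffD1, OF assms(1), rule_format, OF oc] .
  then have "\<exists>\<F>. finite \<F> \<and> \<F> \<subseteq> U ` I \<and> S \<subseteq> \<Union>\<F>" unfolding S_def .
  then obtain \<F> where F1: "finite \<F>" "\<F> \<subseteq> U ` I" "S \<subseteq> \<Union>\<F>" by blast
  obtain F where F: "F \<subseteq> I" "finite F" "\<F> = U ` F"
    using finite_subset_image[OF F1(1,2)] by blast
  have cov: "S \<subseteq> (\<Union>i\<in>F. U i)" using F1(3) F(3) by simp
  have c1: "compactin (Metric_space.mtopology S m) S"
    unfolding Xm[symmetric] using assms(1) unfolding compact_space_def S_def .
  have c2: "\<And>V. V \<in> U ` F \<Longrightarrow> openin (Metric_space.mtopology S m) V"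
  proof -
    fix V assume "V \<in> U ` F"
    then obtain i where "i \<in> F" "V = U i" by blast
    then have "openin X (U i)" using assms(3) F(1) by blast
    then show "openin (Metric_space.mtopology S m) V" unfolding Xm[symmetric] \<open>V = U i\<close> .
  qed
  have c3: "S \<subseteq> \<Union>(U ` F)" using cov by simp
  have "\<exists>\<epsilon>>0. \<forall>x\<in>S. \<exists>V\<in>U ` F. Metric_space.mball S m x \<epsilon> \<subseteq> V"
    by (rule Metric_space.lebesgue_number[OF ms c1 c3 c2])
  then obtain lam where lam: "lam > 0" "\<forall>x\<in>S. \<exists>V\<in>U ` F. Metric_space.mball S m x lam \<subseteq> V"
    by blast
  have leb: "\<And>x. x \<in> S \<Longrightarrow> \<exists>i\<in>F. \<forall>y\<in>S. m x y < lam \<longrightarrow> y \<in> U i"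
  proof -
    fix x assume x: "x \<in> S"
    obtain V where V: "V \<in> U ` F" "Metric_space.mball S m x lam \<subseteq> V" using lam(2) x by blast
    then obtain i where i: "i \<in> F" "Metric_space.mball S m x lam \<subseteq> U i" by blast
    have "\<forall>y\<in>S. m x y < lam \<longrightarrow> y \<in> U i"
      using i(2) x Metric_space.in_mball[OF ms] by blast
    then show "\<exists>i\<in>F. \<forall>y\<in>S. m x y < lam \<longrightarrow> y \<in> U i" using i(1) by blast
  qed
  have mzero: "\<And>x. x \<in> S \<Longrightarrow> m x x = 0" using Metric_space.mdist_zero[OF ms] by blast
  have mcomm: "\<And>x y. m x y = m y x" using Metric_space.commute[OF ms] by blast
  have mnn: "\<And>x y. 0 \<le> m x y" using Metric_space.nonneg[OF ms] by blast
  define P where "P = (\<lambda>x y i. i \<in> F \<and> x \<in> A i \<and> y \<in> A i)"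
  define l where "l = (\<lambda>x y. if \<exists>i. P x y i then L (SOME i. P x y i) x y else 0)"
  have l_case: "\<And>x y. \<exists>i. P x y i \<Longrightarrow> \<exists>k. P x y k \<and> l x y = L k x y"
  proof -
    fix x y assume h: "\<exists>i. P x y i"
    then have "P x y (SOME i. P x y i)" by (rule someI_ex)
    then show "\<exists>k. P x y k \<and> l x y = L k x y" using h unfolding l_def by auto
  qed
  have l_none: "\<And>x y. \<not> (\<exists>i. P x y i) \<Longrightarrow> l x y = 0" unfolding l_def by auto
  have Pk: "\<And>x y k. P x y k \<Longrightarrow> k \<in> I \<and> x \<in> A k \<and> y \<in> A k" unfolding P_def using F(1) by auto
  have Psym: "\<And>x y. P x y = P y x" unfolding P_def by (auto simp: fun_eq_iff)
  have l_sym: "\<And>x y. l x y = l y x"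
  proof -
    fix x y
    show "l x y = l y x"
    proof (cases "\<exists>i. P x y i")
      case True
      then have "P x y (SOME i. P x y i)" by (rule someI_ex)
      then have "L (SOME i. P x y i) x y = L (SOME i. P x y i) y x" using Pk Lsym by blast
      then show ?thesis using True unfolding l_def Psym[of x y] by simp
    next
      case False
      then have "\<not> (\<exists>i. P y x i)" using Psym[of x y] by simp
      then show ?thesis using False l_none by metis
    qed
  qed
  have Kl: "\<And>i \<epsilon>. i \<in> I \<Longrightarrow> \<epsilon> > 0 \<Longrightarrow> \<exists>M. \<forall>x\<in>A i. \<forall>y\<in>A i. L i x y > ereal M \<longrightarrow> m x y < \<epsilon>"
  proof -
    fix i \<epsilon> assume i: "i \<in> I" and e: "(\<epsilon>::real) > 0"
    show "\<exists>M. \<forall>x\<in>A i. \<forall>y\<in>A i. L i x y > ereal M \<longrightarrow> m x y < \<epsilon>"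
      by (rule K_lemma[OF ms AS[of i] tl[OF i] cpt clA[of i] e])
  qed
  have FI: "\<And>k. k \<in> F \<Longrightarrow> k \<in> I" using F(1) by blast
  have l_diag: "\<And>x. x \<in> S \<Longrightarrow> l x x = \<infinity>"
  proof -
    fix x assume x: "x \<in> S"
    then obtain i where i: "i \<in> F" "x \<in> U i" using cov by blast
    then have "x \<in> A i" using UA FI by blast
    then have "P x x i" unfolding P_def using i by blast
    then obtain k where k: "P x x k" "l x x = L k x x" using l_case by blast
    have "L k x x = \<infinity>" using Linf[of k x x] Pk[OF k(1)] by simp
    then show "l x x = \<infinity>" using k(2) by simp
  qed
  have l_nn: "\<And>x y. l x y \<ge> 0"
  proof -
    fix x y
    show "l x y \<ge> 0"
    proof (cases "\<exists>i. P x y i")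
      case True
      then obtain k where k: "P x y k" "l x y = L k x y" using l_case by blast
      then show ?thesis using Pk[OF k(1)] Lpos[of k x y] by simp
    next
      case False
      then show ?thesis using l_none by simp
    qed
  qed
  have l_ninf: "\<And>x y. l x y \<noteq> -\<infinity>" using l_nn by (metis not_MInfty_nonneg)
  have l_infD: "\<And>x y. l x y = \<infinity> \<Longrightarrow> x = y"
  proof -
    fix x y assume h: "l x y = \<infinity>"
    show "x = y"
    proof (cases "\<exists>i. P x y i")
      case True
      then obtain k where k: "P x y k" "l x y = L k x y" using l_case by blast
      then have "L k x y = \<infinity>" using h by simp
      then show ?thesis using Linf[of k x y] Pk[OF k(1)] by simp
    next
      case False
      then show ?thesis using l_none h by simp
    qed
  qed
  have Klf: "\<And>\<epsilon>. \<epsilon> > 0 \<Longrightarrow> \<exists>M\<ge>0. \<forall>k\<in>F. \<forall>x\<in>A k. \<forall>y\<in>A k. L k x y > ereal M \<longrightarrow> m x y < \<epsilon>"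
  proof -
    fix \<epsilon> :: real assume e: "\<epsilon> > 0"
    show "\<exists>M\<ge>0. \<forall>k\<in>F. \<forall>x\<in>A k. \<forall>y\<in>A k. L k x y > ereal M \<longrightarrow> m x y < \<epsilon>"
    proof (rule finite_bound[OF F(2)])
      fix k assume "k \<in> F"
      then show "\<exists>M. \<forall>x\<in>A k. \<forall>y\<in>A k. L k x y > ereal M \<longrightarrow> m x y < \<epsilon>" using Kl FI e by blast
    next
      fix k M M' assume h: "\<forall>x\<in>A k. \<forall>y\<in>A k. L k x y > ereal M \<longrightarrow> m x y < \<epsilon>" and MM: "(M::real) \<le> M'"
      show "\<forall>x\<in>A k. \<forall>y\<in>A k. L k x y > ereal M' \<longrightarrow> m x y < \<epsilon>"
      proof (intro ballI impI)
        fix x y assume xy: "x \<in> A k" "y \<in> A k" "L k x y > ereal M'"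
        then have "L k x y > ereal M" using MM by (meson ereal_less_eq(3) order_le_less_trans)
        then show "m x y < \<epsilon>" using h xy by blast
      qed
    qed
  qed
  have T1: "\<And>\<epsilon>. \<epsilon> > 0 \<Longrightarrow> \<exists>M. \<forall>x\<in>S. \<forall>y\<in>S. l x y > ereal M \<longrightarrow> m x y < \<epsilon>"
  proof -
    fix \<epsilon> :: real assume e: "\<epsilon> > 0"
    obtain M where M: "M \<ge> 0" "\<forall>k\<in>F. \<forall>x\<in>A k. \<forall>y\<in>A k. L k x y > ereal M \<longrightarrow> m x y < \<epsilon>"
      using Klf[OF e] by blast
    have "\<forall>x\<in>S. \<forall>y\<in>S. l x y > ereal M \<longrightarrow> m x y < \<epsilon>"
    proof (intro ballI impI)
      fix x y assume xy: "x \<in> S" "y \<in> S" "l x y > ereal M"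
      show "m x y < \<epsilon>"
      proof (cases "\<exists>i. P x y i")
        case True
        then obtain k where k: "P x y k" "l x y = L k x y" using l_case by blast
        then show ?thesis using M(2) xy(3) unfolding P_def by auto
      next
        case False
        then show ?thesis using l_none xy(3) M(1) by simp
      qed
    qed
    then show "\<exists>M. \<forall>x\<in>S. \<forall>y\<in>S. l x y > ereal M \<longrightarrow> m x y < \<epsilon>" by blast
  qed
  have Lip0: "\<And>j. j \<in> I \<Longrightarrow> \<exists>C\<ge>0. \<forall>x\<in>A j. \<forall>y\<in>A j. l x y \<le> L j x y + ereal C \<and> L j x y \<le> l x y + ereal C"
  proof -
    fix j assume j: "j \<in> I"
    define Q where "Q = (\<lambda>k C. \<forall>x\<in>A k \<inter> A j. \<forall>y\<in>A k \<inter> A j. L k x y \<le> L j x y + ereal C \<and> L j x y \<le> L k x y + ereal C)"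
    have "\<exists>C0\<ge>0. \<forall>k\<in>F. Q k C0"
    proof (rule finite_bound[OF F(2)])
      fix k assume "k \<in> F"
      then have "lipschitz_equiv_on (A k \<inter> A j) (L k) (L j)" using assms(7)[of k j] FI j unfolding A_def by blast
      then show "\<exists>C. Q k C" unfolding lipschitz_equiv_on_def Q_def by blast
    next
      fix k C C' assume "Q k C" "(C::real) \<le> C'"
      then show "Q k C'" unfolding Q_def using ereal_add_le_mono by blast
    qed
    then obtain C0 where C0: "C0 \<ge> 0" "\<forall>k\<in>F. Q k C0" by blast
    obtain Mj where Mj: "\<forall>x\<in>A j. \<forall>y\<in>A j. L j x y > ereal Mj \<longrightarrow> m x y < lam" using Kl[OF j lam(1)] by blast
    define C where "C = max C0 Mj"
    have "\<forall>x\<in>A j. \<forall>y\<in>A j. l x y \<le> L j x y + ereal C \<and> L j x y \<le> l x y + ereal C"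
    proof (intro ballI)
      fix x y assume xy: "x \<in> A j" "y \<in> A j"
      show "l x y \<le> L j x y + ereal C \<and> L j x y \<le> l x y + ereal C"
      proof (cases "\<exists>i. P x y i")
        case True
        then obtain k where k: "P x y k" "l x y = L k x y" using l_case by blast
        then have "k \<in> F" "x \<in> A k" "y \<in> A k" unfolding P_def by auto
        then have "L k x y \<le> L j x y + ereal C0 \<and> L j x y \<le> L k x y + ereal C0"
          using C0(2) xy unfolding Q_def by blast
        then show ?thesis using k(2) ereal_add_le_mono[of _ _ C0 C] unfolding C_def by auto
      next
        case False
        then have l0: "l x y = 0" by (rule l_none)
        have "\<not> L j x y > ereal Mj"
        proof
          assume "L j x y > ereal Mj"
          then have mxy: "m x y < lam" using Mj xy by blast
          have xS: "x \<in> S" "y \<in> S" using xy AS by auto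
          obtain i where i: "i \<in> F" "\<forall>y\<in>S. m x y < lam \<longrightarrow> y \<in> U i" using leb[OF xS(1)] by blast
          have "x \<in> U i" "y \<in> U i" using i(2) xS mxy mzero lam(1) by auto
          then have "P x y i" unfolding P_def using i(1) UA FI by blast
          then show False using False by blast
        qed
        then have "L j x y \<le> ereal C" unfolding C_def by (meson ereal_less_eq(3) max.cobounded2 not_le order_trans)
        moreover have "L j x y \<ge> 0" using Lpos[OF j xy] by simp
        moreover have "C \<ge> 0" unfolding C_def using C0(1) by simp
        ultimately show ?thesis using l0 by (simp add: add_increasing2)
      qed
    qed
    moreover have "C \<ge> 0" unfolding C_def using C0(1) by simp
    ultimately show "\<exists>C\<ge>0. \<forall>x\<in>A j. \<forall>y\<in>A j. l x y \<le> L j x y + ereal C \<and> L j x y \<le> l x y + ereal C" by blast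
  qed
  define Q2 where "Q2 = (\<lambda>k D. (\<forall>x\<in>A k. \<forall>y\<in>A k. \<forall>z\<in>A k. L k x z \<ge> min (L k x y) (L k y z) - ereal D) \<and>
      (\<forall>x\<in>A k. \<forall>y\<in>A k. l x y \<le> L k x y + ereal D \<and> L k x y \<le> l x y + ereal D))"
  have "\<exists>D0\<ge>0. \<forall>k\<in>F. Q2 k D0"
  proof (rule finite_bound[OF F(2)])
    fix k assume k: "k \<in> F"
    obtain \<delta> :: real where dk: "\<forall>x\<in>A k. \<forall>y\<in>A k. \<forall>z\<in>A k. L k x z \<ge> min (L k x y) (L k y z) - ereal \<delta>"
      using conjunct2[OF lsi[OF FI[OF k], unfolded log_scale_on_def]] by blast
    obtain C where Ck: "\<forall>x\<in>A k. \<forall>y\<in>A k. l x y \<le> L k x y + ereal C \<and> L k x y \<le> l x y + ereal C"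
      using Lip0[OF FI[OF k]] by blast
    have "Q2 k (max \<delta> C)" unfolding Q2_def
    proof (intro conjI ballI)
      fix x y z assume xyz: "x \<in> A k" "y \<in> A k" "z \<in> A k"
      have "min (L k x y) (L k y z) - ereal (max \<delta> C) \<le> min (L k x y) (L k y z) - ereal \<delta>"
        by (rule ereal_minus_mono) auto
      also have "\<dots> \<le> L k x z" using dk xyz by blast
      finally show "min (L k x y) (L k y z) - ereal (max \<delta> C) \<le> L k x z" .
    next
      fix x y assume xy: "x \<in> A k" "y \<in> A k"
      have CC: "C \<le> max \<delta> C" by simp
      have e1: "l x y \<le> L k x y + ereal C" and e2: "L k x y \<le> l x y + ereal C" using Ck xy by blast+
      show "l x y \<le> L k x y + ereal (max \<delta> C)" by (rule ereal_add_le_mono[OF e1 CC])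
      show "L k x y \<le> l x y + ereal (max \<delta> C)" by (rule ereal_add_le_mono[OF e2 CC])
    qed
    then show "\<exists>D. Q2 k D" by blast
  next
    fix k D D' assume h: "Q2 k D" and DD: "(D::real) \<le> D'"
    show "Q2 k D'" unfolding Q2_def
    proof (intro conjI ballI)
      fix x y z assume xyz: "x \<in> A k" "y \<in> A k" "z \<in> A k"
      have "min (L k x y) (L k y z) - ereal D' \<le> min (L k x y) (L k y z) - ereal D"
        by (rule ereal_minus_mono) (use DD in auto)
      also have "\<dots> \<le> L k x z" using h xyz unfolding Q2_def by blast
      finally show "min (L k x y) (L k y z) - ereal D' \<le> L k x z" .
    next
      fix x y assume xy: "x \<in> A k" "y \<in> A k"
      have e1: "l x y \<le> L k x y + ereal D" and e2: "L k x y \<le> l x y + ereal D"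
        using h xy unfolding Q2_def by blast+
      show "l x y \<le> L k x y + ereal D'" by (rule ereal_add_le_mono[OF e1 DD])
      show "L k x y \<le> l x y + ereal D'" by (rule ereal_add_le_mono[OF e2 DD])
    qed
  qed
  then obtain D0 where D0: "D0 \<ge> 0" "\<forall>k\<in>F. Q2 k D0" by blast
  have fin: "\<And>a::ereal. a \<noteq> \<infinity> \<Longrightarrow> a \<noteq> -\<infinity> \<Longrightarrow> \<exists>r. a = ereal r"
    by (case_tac a) auto
  have T2: "\<And>x M. x \<in> S \<Longrightarrow> \<exists>r>0. \<forall>y\<in>S. m x y < r \<longrightarrow> l x y > ereal M"
  proof -
    fix x M assume x: "x \<in> S"
    obtain i where i: "i \<in> F" "\<forall>y\<in>S. m x y < lam \<longrightarrow> y \<in> U i" using leb[OF x] by blast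
    have "x \<in> U i" using i(2) x mzero[OF x] lam(1) by auto
    then have xA: "x \<in> A i" using UA[OF FI[OF i(1)]] by blast
    obtain r0 where r0: "r0 > 0" "\<forall>y\<in>A i. m x y < r0 \<longrightarrow> L i x y > ereal (M + D0)"
      using P_lemma[OF ms AS[of i] tl[OF FI[OF i(1)]] xA] by blast
    have "\<forall>y\<in>S. m x y < min lam r0 \<longrightarrow> l x y > ereal M"
    proof (intro ballI impI)
      fix y assume y: "y \<in> S" "m x y < min lam r0"
      then have "y \<in> U i" using i(2) by auto
      then have yA: "y \<in> A i" using UA[OF FI[OF i(1)]] by blast
      then have L1: "L i x y > ereal (M + D0)" using r0 y by auto
      have L2: "L i x y \<le> l x y + ereal D0" using D0(2) i(1) xA yA unfolding Q2_def by blast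
      show "l x y > ereal M"
      proof (cases "l x y")
        case (real t)
        then show ?thesis using L1 L2 by (cases "L i x y") auto
      next
        case PInf then show ?thesis by simp
      next
        case MInf then show ?thesis using l_ninf by simp
      qed
    qed
    then show "\<exists>r>0. \<forall>y\<in>S. m x y < r \<longrightarrow> l x y > ereal M" using lam(1) r0(1)
      by (intro exI[of _ "min lam r0"]) auto
  qed
  have "lam / 2 > 0" using lam(1) by simp
  then obtain Mlam where Mlam: "\<forall>x\<in>S. \<forall>y\<in>S. l x y > ereal Mlam \<longrightarrow> m x y < lam / 2"
    using T1 by blast
  define Mp where "Mp = max Mlam 0"
  define \<delta> where "\<delta> = Mp + 3 * D0"
  have d0: "\<delta> \<ge> 0" unfolding \<delta>_def Mp_def using D0(1) by simp
  have ultra: "\<And>x y z. x \<in> S \<Longrightarrow> y \<in> S \<Longrightarrow> z \<in> S \<Longrightarrow> l x z \<ge> min (l x y) (l y z) - ereal \<delta>"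
  proof -
    fix x y z assume xyz: "x \<in> S" "y \<in> S" "z \<in> S"
    have sub: "a - ereal \<delta> \<le> a" for a :: ereal
      by (rule ereal_diff_le_self) (use d0 in simp)
    show "l x z \<ge> min (l x y) (l y z) - ereal \<delta>"
    proof (cases "x = y \<or> y = z \<or> x = z")
      case True
      then show ?thesis
      proof (elim disjE)
        assume "x = y"
        then show ?thesis using sub[of "min (l x y) (l y z)"] by (simp add: min.coboundedI2 order_trans)
      next
        assume "y = z"
        then show ?thesis using sub[of "min (l x y) (l y z)"] by (simp add: min.coboundedI1 order_trans)
      next
        assume "x = z"
        then show ?thesis using l_diag[OF xyz(1)] by simp
      qed
    next
      case False
      then have dist: "x \<noteq> y" "y \<noteq> z" "x \<noteq> z" by auto
      show ?thesis
      proof (cases "l x y > ereal Mp \<and> l y z > ereal Mp")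
        case True
        then have "l x y > ereal Mlam" "l y z > ereal Mlam" unfolding Mp_def
          by (meson ereal_less_eq(3) max.cobounded1 order_le_less_trans)+
        then have mm: "m x y < lam / 2" "m y z < lam / 2" using Mlam xyz by blast+
        obtain i where i: "i \<in> F" "\<forall>w\<in>S. m y w < lam \<longrightarrow> w \<in> U i" using leb[OF xyz(2)] by blast
        have "m y x < lam" using mm(1) mcomm[of x y] mnn[of y x] by linarith
        then have "x \<in> U i" using i(2) xyz(1) by blast
        moreover have "m y z < lam" using mm(2) mnn[of y z] by linarith
        then have "z \<in> U i" using i(2) xyz(3) by blast
        moreover have "y \<in> U i" using i(2) xyz(2) mzero lam(1) by auto
        ultimately have inA: "x \<in> A i" "y \<in> A i" "z \<in> A i" using UA FI[OF i(1)] by auto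
        have q: "Q2 i D0" using D0(2) i(1) by blast
        have t: "L i x z \<ge> min (L i x y) (L i y z) - ereal D0" using q inA unfolding Q2_def by blast
        have c1: "L i x y \<ge> l x y - ereal D0" "L i y z \<ge> l y z - ereal D0" "l x z \<ge> L i x z - ereal D0"
        proof -
          have "l x y \<le> L i x y + ereal D0" "l y z \<le> L i y z + ereal D0" "L i x z \<le> l x z + ereal D0"
            using q inA unfolding Q2_def by blast+
          then show "L i x y \<ge> l x y - ereal D0" "L i y z \<ge> l y z - ereal D0" "l x z \<ge> L i x z - ereal D0"
            by (simp_all add: ereal_minus_le)
        qed
        have iI: "i \<in> I" using FI[OF i(1)] .
        obtain a where a: "l x y = ereal a" using fin[of "l x y"] l_infD[of x y] dist l_ninf by blast
        obtain b where b: "l y z = ereal b" using fin[of "l y z"] l_infD[of y z] dist l_ninf by blast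
        obtain c where c: "l x z = ereal c" using fin[of "l x z"] l_infD[of x z] dist l_ninf by blast
        obtain p where p: "L i x y = ereal p" using fin[of "L i x y"] Linf[OF iI inA(1,2)] Lninf[OF iI inA(1,2)] dist by blast
        obtain q where q: "L i y z = ereal q" using fin[of "L i y z"] Linf[OF iI inA(2,3)] Lninf[OF iI inA(2,3)] dist by blast
        obtain r where r: "L i x z = ereal r" using fin[of "L i x z"] Linf[OF iI inA(1,3)] Lninf[OF iI inA(1,3)] dist by blast
        have tr: "r \<ge> min p q - D0" using t p q r by (simp add: min_def split: if_splits)
        have r1: "p \<ge> a - D0" "q \<ge> b - D0" "c \<ge> r - D0" using c1 a b c p q r by simp_all
        have Mp0: "Mp \<ge> 0" unfolding Mp_def by simp
        have "c \<ge> min a b - \<delta>" using tr r1 D0(1) Mp0 unfolding \<delta>_def by (simp add: min_def split: if_splits)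
        then show ?thesis using a b c by (simp add: min_def split: if_splits)
      next
        case False
        then have "min (l x y) (l y z) \<le> ereal Mp" by (auto simp: min_le_iff_disj not_less)
        then have "min (l x y) (l y z) - ereal \<delta> \<le> ereal Mp - ereal \<delta>" by (rule ereal_minus_mono) simp
        also have "\<dots> \<le> 0" unfolding \<delta>_def using D0(1) by simp
        also have "\<dots> \<le> l x z" by (rule l_nn)
        finally show ?thesis .
      qed
    qed
  qed
  have ls: "log_scale_on S l"
    unfolding log_scale_on_def
  proof (intro conjI ballI exI[of _ \<delta>])
    fix x y assume xy: "x \<in> S" "y \<in> S"
    show "l x y = l y x" by (rule l_sym)
    show "l x y \<noteq> -\<infinity>" by (rule l_ninf)
    show "l x y = \<infinity> \<longleftrightarrow> x = y" using l_infD l_diag xy by blast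
  next
    show "\<delta> \<ge> 0" by (rule d0)
  next
    fix x y z assume "x \<in> S" "y \<in> S" "z \<in> S"
    then show "l x z \<ge> min (l x y) (l y z) - ereal \<delta>" by (rule ultra)
  qed
  have "top_log_scale X l" unfolding Xm by (rule log_scale_top[OF ms ls T1 T2])
  moreover have "\<forall>i\<in>I. lipschitz_equiv_on (X closure_of U i) l (L i)"
  proof
    fix j assume j: "j \<in> I"
    show "lipschitz_equiv_on (X closure_of U j) l (L j)"
      unfolding lipschitz_equiv_on_def using Lip0[OF j] unfolding A_def by blast
  qed
  ultimately show ?thesis by blast
qed

end
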